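(* Let $R\in C^1(\mathbb{R}^3;SO(3))$ be such that $\operatorname{curl}R=\alpha$ on $\mathbb{R}^3$ for some constant $\alpha\in\mathbb{R}^{3\times3}$. Then $\alpha=0$ and $R$ is constant.
   Context: $SO(3)$ is the group of $3\times3$ rotation matrices. For a matrix field $R$, $\operatorname{curl}$ is applied row-wise: $(\operatorname{curl}R)_{ij}=\varepsilon_{jkl}\partial_kR_{il}$ (Einstein summation, $\varepsilon_{jkl}$ the sign of the permutation $(jkl)$). *)

theory Defs
  imports "HOL-Analysis.Analysis"
begin

definition partial :: "(real^3 \<Rightarrow> 'b::real_normed_vector) \<Rightarrow> 3 \<Rightarrow> real^3 \<Rightarrow> 'b" where
  "partial f k x = frechet_derivative f (at x) (axis k 1)"

definition C1_on_R3 :: "(real^3 \<Rightarrow> 'b::real_normed_vector) \<Rightarrow> bool" where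
  "C1_on_R3 f \<longleftrightarrow> (\<forall>x. f differentiable (at x)) \<and>
     (\<forall>k. continuous_on UNIV (partial f k))"

definition levi_civita :: "3 \<Rightarrow> 3 \<Rightarrow> 3 \<Rightarrow> real" where
  "levi_civita j k l =
    (if (j,k,l) \<in> {(1,2,3),(2,3,1),(3,1,2)} then 1
     else if (j,k,l) \<in> {(1,3,2),(3,2,1),(2,1,3)} then -1 else 0)"

definition curl :: "(real^3 \<Rightarrow> real^3^3) \<Rightarrow> real^3 \<Rightarrow> real^3^3" where
  "curl R x = (\<chi> i j. \<Sum>k\<in>UNIV. \<Sum>l\<in>UNIV.
       levi_civita j k l * partial (\<lambda>y. R y $ i $ l) k x)"

end

theory Submission
  imports Defs
begin
lemma deriv_line:
  fixes R :: "real^3 \<Rightarrow> real^3^3"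
  assumes "\<forall>y. R differentiable (at y)"
  shows "((\<lambda>t. R (x + t *\<^sub>R axis k 1) $ i $ l) has_real_derivative (partial R k (x + t *\<^sub>R axis k 1)) $ i $ l) (at t)"
proof -
  define y where "y = x + t *\<^sub>R axis k 1"
  define F where "F = frechet_derivative R (at y)"
  have D: "(R has_derivative F) (at y)" using frechet_derivative_works assms F_def by blast
  have L: "((\<lambda>t. x + t *\<^sub>R axis k 1) has_derivative (\<lambda>h. h *\<^sub>R axis k 1)) (at t)"
    by (auto intro!: derivative_eq_intros)
  have C: "((\<lambda>t. R (x + t *\<^sub>R axis k 1)) has_derivative (\<lambda>h. F (h *\<^sub>R axis k 1))) (at t)"
    using diff_chain_at[OF L, of R F] D y_def by (simp add: o_def)
  have bl: "bounded_linear (\<lambda>A::real^3^3. A $ i $ l)"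
    using bounded_linear_compose[OF bounded_linear_vec_nth bounded_linear_vec_nth] by blast
  have C2: "((\<lambda>t. R (x + t *\<^sub>R axis k 1) $ i $ l) has_derivative (\<lambda>h. F (h *\<^sub>R axis k 1) $ i $ l)) (at t)"
    using bounded_linear.has_derivative[OF bl C] .
  have lin: "linear F" using D has_derivative_linear by blast
  have "(\<lambda>h. F (h *\<^sub>R axis k 1) $ i $ l) = (*) (F (axis k 1) $ i $ l)"
    using lin by (auto simp: linear_scale mult.commute)
  then show ?thesis using C2 unfolding has_field_derivative_def partial_def F_def y_def by simp
qed

lemma green_bound:
  fixes P Q g h :: "real \<Rightarrow> real \<Rightarrow> real" and c L :: real
  assumes L: "L > 0"
    and dQ: "\<And>u v. ((\<lambda>u. Q u v) has_real_derivative g u v) (at u)"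
    and dP: "\<And>u v. ((\<lambda>v. P u v) has_real_derivative h u v) (at v)"
    and ch: "continuous_on UNIV (\<lambda>z. h (fst z) (snd z))"
    and cP: "continuous_on UNIV (\<lambda>z. P (fst z) (snd z))"
    and cQ: "continuous_on UNIV (\<lambda>z. Q (fst z) (snd z))"
    and gh: "\<And>u v. g u v - h u v = c"
    and bP: "\<And>u v. \<bar>P u v\<bar> \<le> 1" and bQ: "\<And>u v. \<bar>Q u v\<bar> \<le> 1"
  shows "\<bar>c\<bar> * L * L \<le> 4 * L"
proof -
  have contP1: "continuous_on S (\<lambda>u. P u v)" for S v
    proof -
    have "continuous_on UNIV ((\<lambda>z. P (fst z) (snd z)) \<circ> (\<lambda>u. (u, v)))"
      by (rule continuous_on_compose[OF _ continuous_on_subset[OF cP]]) (auto intro!: continuous_intros)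
    then show ?thesis by (rule continuous_on_subset[of UNIV, THEN iffD1[OF continuous_on_cong[OF refl], rotated]]) (auto simp: o_def)
  qed
  have contP2: "continuous_on S (\<lambda>v. P u v)" for S u
    proof -
    have "continuous_on UNIV ((\<lambda>z. P (fst z) (snd z)) \<circ> (\<lambda>v. (u, v)))"
      by (rule continuous_on_compose[OF _ continuous_on_subset[OF cP]]) (auto intro!: continuous_intros)
    then show ?thesis by (rule continuous_on_subset[of UNIV, THEN iffD1[OF continuous_on_cong[OF refl], rotated]]) (auto simp: o_def)
  qed
  have contQ1: "continuous_on S (\<lambda>u. Q u v)" for S v
    proof -
    have "continuous_on UNIV ((\<lambda>z. Q (fst z) (snd z)) \<circ> (\<lambda>u. (u, v)))"
      by (rule continuous_on_compose[OF _ continuous_on_subset[OF cQ]]) (auto intro!: continuous_intros)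
    then show ?thesis by (rule continuous_on_subset[of UNIV, THEN iffD1[OF continuous_on_cong[OF refl], rotated]]) (auto simp: o_def)
  qed
  have contQ2: "continuous_on S (\<lambda>v. Q u v)" for S u
    proof -
    have "continuous_on UNIV ((\<lambda>z. Q (fst z) (snd z)) \<circ> (\<lambda>v. (u, v)))"
      by (rule continuous_on_compose[OF _ continuous_on_subset[OF cQ]]) (auto intro!: continuous_intros)
    then show ?thesis by (rule continuous_on_subset[of UNIV, THEN iffD1[OF continuous_on_cong[OF refl], rotated]]) (auto simp: o_def)
  qed
  have fQ: "((\<lambda>u. g u v) has_integral (Q L v - Q 0 v)) {0..L}" for v
    using L dQ by (intro fundamental_theorem_of_calculus)
       (auto simp: has_real_derivative_iff_has_vector_derivative intro: has_vector_derivative_at_within)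
  have fP: "((\<lambda>v. h u v) has_integral (P u L - P u 0)) {0..L}" for u
    using L dP by (intro fundamental_theorem_of_calculus)
       (auto simp: has_real_derivative_iff_has_vector_derivative intro: has_vector_derivative_at_within)
  have hg: "h u v = g u v - c" for u v using gh[of u v] by simp
  have fH: "((\<lambda>u. h u v) has_integral (Q L v - Q 0 v - c * L)) {0..L}" for v
  proof -
    have "((\<lambda>u. g u v - c) has_integral (Q L v - Q 0 v) - measure lborel {0..L} *\<^sub>R c) {0..L}"
      by (rule has_integral_diff[OF fQ has_integral_const_real])
    then show ?thesis using L by (simp add: hg mult.commute)
  qed
  have swap: "integral {0..L} (\<lambda>u. integral {0..L} (\<lambda>v. h u v)) =
           integral {0..L} (\<lambda>v. integral {0..L} (\<lambda>u. h u v))"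
  proof -
    have "continuous_on (cbox (0,0) (L,L)) (\<lambda>(x,y). h x y)"
      using continuous_on_subset[OF ch] by (simp add: case_prod_beta')
    from integral_swap_continuous[OF this] show ?thesis by simp
  qed
  have I: "integral {0..L} (\<lambda>u. P u L - P u 0) = integral {0..L} (\<lambda>v. Q L v - Q 0 v - c * L)"
  proof -
    have e1: "integral {0..L} (h u) = P u L - P u 0" for u using fP[of u] by (rule integral_unique)
    have e2: "integral {0..L} (\<lambda>u. h u v) = Q L v - Q 0 v - c * L" for v using fH[of v] by (rule integral_unique)
    show ?thesis using swap by (simp only: e1 e2)
  qed
  have intQ: "(\<lambda>v. Q L v - Q 0 v) integrable_on {0..L}"
    by (intro integrable_continuous_interval continuous_intros contQ2)
  have I2: "integral {0..L} (\<lambda>v. Q L v - Q 0 v - c * L) = integral {0..L} (\<lambda>v. Q L v - Q 0 v) - c * L * L"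
    using integral_diff[OF intQ integrable_const_ivl[of "c*L" 0 L]] L by simp
  have b1: "norm (integral (cbox 0 L) (\<lambda>u. P u L - P u 0)) \<le> 2 * measure lborel (cbox 0 L)"
    apply (rule integrable_bound)
      apply simp
     apply (simp, intro integrable_continuous_interval continuous_intros contP1)
    using bP by (smt (verit, best) real_norm_def)
  have b2: "norm (integral (cbox 0 L) (\<lambda>v. Q L v - Q 0 v)) \<le> 2 * measure lborel (cbox 0 L)"
    apply (rule integrable_bound)
      apply simp
    using intQ apply simp
    using bQ by (smt (verit, best) real_norm_def)
  have cb: "cbox 0 L = {0..L}" by simp
  have ml: "measure lborel {0..L} = L" using L by simp
  have "\<bar>c * L * L\<bar> \<le> 4 * L" using I I2 b1 b2 L unfolding cb ml by auto
  then show ?thesis using L by (simp add: abs_mult)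
qed

lemma rot_entry_bound:
  fixes M :: "real^'n^'n"
  assumes "rotation_matrix M"
  shows "\<bar>M $ i $ j\<bar> \<le> 1"
proof -
  have "transpose M ** M = mat 1" using assms by (simp add: rotation_matrix_def orthogonal_matrix)
  then have "(transpose M ** M) $ j $ j = 1" by (simp add: mat_def)
  then have s: "(\<Sum>k\<in>UNIV. M $ k $ j * M $ k $ j) = 1"
    by (simp add: matrix_matrix_mult_def transpose_def)
  have "M $ i $ j * M $ i $ j \<le> (\<Sum>k\<in>UNIV. M $ k $ j * M $ k $ j)"
    by (rule member_le_sum) auto
  then have "(M $ i $ j)^2 \<le> 1" using s by (simp add: power2_eq_square)
  then show ?thesis by (simp add: abs_square_le_1)
qed

lemma partial_component:
  fixes R :: "real^3 \<Rightarrow> real^3^3"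
  assumes "R differentiable (at x)"
  shows "partial (\<lambda>y. R y $ i $ l) k x = partial R k x $ i $ l"
proof -
  define F where "F = frechet_derivative R (at x)"
  have D: "(R has_derivative F) (at x)" using frechet_derivative_works assms F_def by blast
  have bl: "bounded_linear (\<lambda>A::real^3^3. A $ i $ l)"
    using bounded_linear_compose[OF bounded_linear_vec_nth bounded_linear_vec_nth] by blast
  have C2: "((\<lambda>y. R y $ i $ l) has_derivative (\<lambda>h. F h $ i $ l)) (at x)"
    using bounded_linear.has_derivative[OF bl D] .
  from frechet_derivative_at[OF C2] show ?thesis unfolding partial_def F_def by metis
qed

lemma entry_zero:
  fixes R :: "real^3 \<Rightarrow> real^3^3" and c0 :: real
  assumes C1: "C1_on_R3 R" and rot: "\<And>x. rotation_matrix (R x)"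
    and eq: "\<And>x. partial R a x $ i $ b - partial R b x $ i $ a = c0"
  shows "c0 = 0"
proof -
  have dR: "\<forall>y. R differentiable (at y)" and cR: "\<And>k. continuous_on UNIV (partial R k)"
    using C1 unfolding C1_on_R3_def by auto
  have contR: "continuous_on UNIV R"
    using dR by (intro differentiable_imp_continuous_on) (auto simp: differentiable_at_withinI differentiable_on_def)
  define p where "p = (\<lambda>z::real\<times>real. fst z *\<^sub>R axis a (1::real) + snd z *\<^sub>R (axis b 1 :: real^3))"
  have cp: "continuous_on UNIV p" unfolding p_def by (intro continuous_intros)
  have key: "\<bar>c0\<bar> * L * L \<le> 4 * L" if "L > 0" for L
  proof (rule green_bound[where P="\<lambda>u v. R (u *\<^sub>R axis a 1 + v *\<^sub>R axis b 1) $ i $ a"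
        and Q = "\<lambda>u v. R (u *\<^sub>R axis a 1 + v *\<^sub>R axis b 1) $ i $ b"
        and g = "\<lambda>u v. partial R a (u *\<^sub>R axis a 1 + v *\<^sub>R axis b 1) $ i $ b"
        and h = "\<lambda>u v. partial R b (u *\<^sub>R axis a 1 + v *\<^sub>R axis b 1) $ i $ a"])
    show "L > 0" by fact
    show "((\<lambda>u. R (u *\<^sub>R axis a 1 + v *\<^sub>R axis b 1) $ i $ b) has_real_derivative
          partial R a (u *\<^sub>R axis a 1 + v *\<^sub>R axis b 1) $ i $ b) (at u)" for u v
      using deriv_line[OF dR, of "v *\<^sub>R axis b 1" a i b u] by (simp add: add.commute)
    show "((\<lambda>v. R (u *\<^sub>R axis a 1 + v *\<^sub>R axis b 1) $ i $ a) has_real_derivative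
          partial R b (u *\<^sub>R axis a 1 + v *\<^sub>R axis b 1) $ i $ a) (at v)" for u v
      using deriv_line[OF dR, of "u *\<^sub>R axis a 1" b i a v] by simp
    have "continuous_on UNIV (\<lambda>z. partial R b (p z) $ i $ a)"
      by (intro continuous_intros continuous_on_compose2[OF cR[of b] cp]) auto
    then show "continuous_on UNIV (\<lambda>z. partial R b (fst z *\<^sub>R axis a 1 + snd z *\<^sub>R axis b 1) $ i $ a)"
      unfolding p_def .
    have "continuous_on UNIV (\<lambda>z. R (p z) $ i $ a)"
      by (intro continuous_intros continuous_on_compose2[OF contR cp]) auto
    then show "continuous_on UNIV (\<lambda>z. R (fst z *\<^sub>R axis a 1 + snd z *\<^sub>R axis b 1) $ i $ a)"
      unfolding p_def .
    have "continuous_on UNIV (\<lambda>z. R (p z) $ i $ b)"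
      by (intro continuous_intros continuous_on_compose2[OF contR cp]) auto
    then show "continuous_on UNIV (\<lambda>z. R (fst z *\<^sub>R axis a 1 + snd z *\<^sub>R axis b 1) $ i $ b)"
      unfolding p_def .
    show "partial R a (u *\<^sub>R axis a 1 + v *\<^sub>R axis b 1) $ i $ b -
          partial R b (u *\<^sub>R axis a 1 + v *\<^sub>R axis b 1) $ i $ a = c0" for u v
      by (rule eq)
    show "\<bar>R (u *\<^sub>R axis a 1 + v *\<^sub>R axis b 1) $ i $ a\<bar> \<le> 1" for u v
      by (rule rot_entry_bound[OF rot])
    show "\<bar>R (u *\<^sub>R axis a 1 + v *\<^sub>R axis b 1) $ i $ b\<bar> \<le> 1" for u v
      by (rule rot_entry_bound[OF rot])
  qed
  show "c0 = 0"
  proof (rule ccontr)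
    assume "c0 \<noteq> 0"
    then have pos: "\<bar>c0\<bar> > 0" by simp
    define L where "L = 5 / \<bar>c0\<bar>"
    have L0: "L > 0" using pos L_def by simp
    have "\<bar>c0\<bar> * L = 5" using pos L_def by simp
    then have "\<bar>c0\<bar> * L * L = 5 * L" by simp
    with key[OF L0] L0 show False by simp
  qed
qed

lemma curl_expand:
  fixes R :: "real^3 \<Rightarrow> real^3^3"
  assumes "R differentiable (at x)"
  shows "curl R x $ i $ 1 = partial R 2 x $ i $ 3 - partial R 3 x $ i $ 2"
    and "curl R x $ i $ 2 = partial R 3 x $ i $ 1 - partial R 1 x $ i $ 3"
    and "curl R x $ i $ 3 = partial R 1 x $ i $ 2 - partial R 2 x $ i $ 1"
  by (simp_all add: curl_def partial_component[OF assms] sum_3 levi_civita_def)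

lemma skew_deriv:
  fixes R :: "real^3 \<Rightarrow> real^3^3"
  assumes dR: "\<forall>y. R differentiable (at y)" and rot: "\<And>x. rotation_matrix (R x)"
  shows "(\<Sum>i\<in>UNIV. partial R k x $ i $ j * R x $ i $ l + R x $ i $ j * partial R k x $ i $ l) = 0"
proof -
  have c: "(\<Sum>i\<in>UNIV. R y $ i $ j * R y $ i $ l) = (if j = l then 1 else 0)" for y
  proof -
    have "transpose (R y) ** R y = mat 1" using rot[of y] by (simp add: rotation_matrix_def orthogonal_matrix)
    then have "(transpose (R y) ** R y) $ j $ l = mat 1 $ j $ l" by simp
    then show ?thesis by (simp add: matrix_matrix_mult_def transpose_def mat_def)
  qed
  have d: "((\<lambda>t. \<Sum>i\<in>UNIV. R (x + t *\<^sub>R axis k 1) $ i $ j * R (x + t *\<^sub>R axis k 1) $ i $ l) has_real_derivative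
     (\<Sum>i\<in>UNIV. partial R k x $ i $ j * R x $ i $ l + R x $ i $ j * partial R k x $ i $ l)) (at 0)"
  proof (rule DERIV_sum)
    fix n
    show "((\<lambda>t. R (x + t *\<^sub>R axis k 1) $ n $ j * R (x + t *\<^sub>R axis k 1) $ n $ l) has_real_derivative
       partial R k x $ n $ j * R x $ n $ l + R x $ n $ j * partial R k x $ n $ l) (at 0)"
      using DERIV_mult[OF deriv_line[OF dR, of x k n j 0] deriv_line[OF dR, of x k n l 0]] by (simp add: mult.commute)
  qed
  have d0: "((\<lambda>t. \<Sum>i\<in>UNIV. R (x + t *\<^sub>R axis k 1) $ i $ j * R (x + t *\<^sub>R axis k 1) $ i $ l) has_real_derivative 0) (at 0)"
    by (simp only: c DERIV_const)
  from DERIV_unique[OF d d0] show ?thesis by simp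
qed

lemma zero_partials:
  fixes M :: "real^3^3" and D :: "3 \<Rightarrow> real^3^3"
  assumes orth: "orthogonal_matrix M"
    and sk: "\<And>k j l. (\<Sum>i\<in>UNIV. D k $ i $ j * M $ i $ l + M $ i $ j * D k $ i $ l) = 0"
    and c1: "\<And>i. D 2 $ i $ 3 = D 3 $ i $ 2"
    and c2: "\<And>i. D 3 $ i $ 1 = D 1 $ i $ 3"
    and c3: "\<And>i. D 1 $ i $ 2 = D 2 $ i $ 1"
  shows "D k = 0"
proof -
  define B where "B k = transpose M ** D k" for k
  have Be: "B k $ m $ l = (\<Sum>i\<in>UNIV. M $ i $ m * D k $ i $ l)" for k m l
    by (simp add: B_def matrix_matrix_mult_def transpose_def)
  have skB: "B k $ m $ l + B k $ l $ m = 0" for k m l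
    using sk[of k l m] by (simp add: Be sum.distrib[symmetric] algebra_simps)
  have cB1: "B 2 $ m $ 3 = B 3 $ m $ 2" for m by (simp add: Be c1)
  have cB2: "B 3 $ m $ 1 = B 1 $ m $ 3" for m by (simp add: Be c2)
  have cB3: "B 1 $ m $ 2 = B 2 $ m $ 1" for m by (simp add: Be c3)
  have "B k $ m $ l = 0" for k m l
  proof -
    note S = skB[of 1 1 1] skB[of 1 1 2] skB[of 1 1 3] skB[of 1 2 2] skB[of 1 2 3] skB[of 1 3 3]
             skB[of 2 1 1] skB[of 2 1 2] skB[of 2 1 3] skB[of 2 2 2] skB[of 2 2 3] skB[of 2 3 3]
             skB[of 3 1 1] skB[of 3 1 2] skB[of 3 1 3] skB[of 3 2 2] skB[of 3 2 3] skB[of 3 3 3]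
             cB1[of 1] cB1[of 2] cB1[of 3] cB2[of 1] cB2[of 2] cB2[of 3] cB3[of 1] cB3[of 2] cB3[of 3]
    have "\<forall>k m l. B k $ m $ l = 0"
      unfolding forall_3 using S by linarith
    then show ?thesis by blast
  qed
  then have B0: "transpose M ** D k = 0" by (simp add: B_def[symmetric] vec_eq_iff)
  have "M ** transpose M = mat 1" using orth by (simp add: orthogonal_matrix_def)
  then have "D k = (M ** transpose M) ** D k" by (simp add: matrix_mul_lid)
  also have "\<dots> = M ** (transpose M ** D k)" by (simp add: matrix_mul_assoc)
  also have "\<dots> = 0" by (simp add: B0)
  finally show ?thesis .
qed

theorem theorem4p1:
  fixes R :: "real^3 \<Rightarrow> real^3^3" and \<alpha> :: "real^3^3"
  assumes "C1_on_R3 R"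
    and "\<And>x. rotation_matrix (R x)"
    and "\<And>x. curl R x = \<alpha>"
  shows "\<alpha> = 0 \<and> (\<exists>R0. \<forall>x. R x = R0)"
proof -
  have dR: "\<forall>y. R differentiable (at y)" using assms(1) unfolding C1_on_R3_def by auto
  have ce1: "partial R 2 x $ i $ 3 - partial R 3 x $ i $ 2 = \<alpha> $ i $ 1" for x i
    using curl_expand(1)[of R x i] dR assms(3)[of x] by simp
  have ce2: "partial R 3 x $ i $ 1 - partial R 1 x $ i $ 3 = \<alpha> $ i $ 2" for x i
    using curl_expand(2)[of R x i] dR assms(3)[of x] by simp
  have ce3: "partial R 1 x $ i $ 2 - partial R 2 x $ i $ 1 = \<alpha> $ i $ 3" for x i
    using curl_expand(3)[of R x i] dR assms(3)[of x] by simp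
  have z1: "\<alpha> $ i $ 1 = 0" for i by (rule entry_zero[OF assms(1,2) ce1])
  have z2: "\<alpha> $ i $ 2 = 0" for i by (rule entry_zero[OF assms(1,2) ce2])
  have z3: "\<alpha> $ i $ 3 = 0" for i by (rule entry_zero[OF assms(1,2) ce3])
  have a0: "\<alpha> = 0" unfolding vec_eq_iff using z1 z2 z3 by (simp add: forall_3)
  have D0: "partial R k x = 0" for k x
  proof (rule zero_partials[of "R x" "\<lambda>k. partial R k x"])
    show "orthogonal_matrix (R x)" using assms(2)[of x] by (simp add: rotation_matrix_def)
    show "(\<Sum>i\<in>UNIV. partial R k x $ i $ j * R x $ i $ l + R x $ i $ j * partial R k x $ i $ l) = 0" for k j l
      by (rule skew_deriv[OF dR assms(2)])
    show "partial R 2 x $ i $ 3 = partial R 3 x $ i $ 2" for i using ce1[of x i] z1[of i] by simp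
    show "partial R 3 x $ i $ 1 = partial R 1 x $ i $ 3" for i using ce2[of x i] z2[of i] by simp
    show "partial R 1 x $ i $ 2 = partial R 2 x $ i $ 1" for i using ce3[of x i] z3[of i] by simp
  qed
  have hd: "(R has_derivative (\<lambda>h. 0)) (at x within UNIV)" for x
  proof -
    define F where "F = frechet_derivative R (at x)"
    have D: "(R has_derivative F) (at x)" using frechet_derivative_works dR F_def by blast
    have lin: "linear F" using D has_derivative_linear by blast
    have Fa: "F (axis k 1) = 0" for k using D0[of k x] unfolding partial_def F_def .
    have "F h = 0" for h
    proof -
      have "F h = F (\<Sum>k\<in>UNIV. (h $ k) *\<^sub>R axis k 1)"
        using basis_expansion[of h] by (simp add: scalar_mult_eq_scaleR)
      also have "\<dots> = (\<Sum>k\<in>UNIV. (h $ k) *\<^sub>R F (axis k 1))"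
        using lin by (simp add: linear_sum linear_scale)
      also have "\<dots> = 0" by (simp add: Fa)
      finally show ?thesis .
    qed
    then have "F = (\<lambda>h. 0)" by auto
    then show ?thesis using D by simp
  qed
  obtain c where "\<forall>x\<in>UNIV. R x = c"
    using has_derivative_zero_constant[of UNIV R] hd by blast
  then show ?thesis using a0 by auto
qed
end
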